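(* Consider the prefix code $C_\infty$ for $\mathcal{A}$ in which, for each $s\ge0$, writing $s=2^t-1+r$ with $t\ge0$ and $0\le r\le 2^t-1$, exactly $2^t-1-r$ of the $s+1$ pairs $(i,j)$ with $i+j=s$ receive codewords of length $(t-1)(s+2)+2r+2$ and the remaining $2r+1$ receive codewords of length $(t-1)(s+2)+2r+3$. Then for every $q\in(0,1)$ the expected codeword length of $C_\infty$ under $\mathrm{TDGD}(q)$ is $$\bar L_q(C_\infty)=1+\frac{1}{1-q}\sum_{t\ge0}q^{2^t}\big(2^t(1-q)+2\big).$$
   Context: $\mathcal{A}=\{(i,j):i,j\in\mathbb{Z}_{\ge0}\}$; $\mathrm{TDGD}(q)$ is the distribution $P(i,j)=(1-q)^2q^{i+j}$ on $\mathcal{A}$. *)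

theory Defs
  imports "HOL-Analysis.Analysis" "HOL-Library.Sublist"
begin

definition tdgd :: "real \<Rightarrow> nat \<times> nat \<Rightarrow> real" where
  "tdgd q a = (1 - q)^2 * q ^ (fst a + snd a)"

definition prefix_code :: "('a \<Rightarrow> bool list) \<Rightarrow> bool" where
  "prefix_code C \<longleftrightarrow> (\<forall>a b. a \<noteq> b \<longrightarrow> \<not> prefix (C a) (C b))"

definition short_len :: "nat \<Rightarrow> nat \<Rightarrow> nat \<Rightarrow> int" where
  "short_len t s r = (int t - 1) * (int s + 2) + 2 * int r + 2"

definition Cinf_lengths :: "(nat \<times> nat \<Rightarrow> bool list) \<Rightarrow> bool" where
  "Cinf_lengths C \<longleftrightarrow>
    (\<forall>s t r. s = 2^t - 1 + r \<and> r \<le> 2^t - 1 \<longrightarrow>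
       card {(i, j). i + j = s \<and> int (length (C (i, j))) = short_len t s r} = 2^t - 1 - r \<and>
       card {(i, j). i + j = s \<and> int (length (C (i, j))) = short_len t s r + 1} = 2 * r + 1)"

end

theory Submission
  imports Defs
begin

lemma nn_Sigma:
  fixes f :: "'a \<times> 'b \<Rightarrow> real"
  assumes "\<And>x. x \<in> A \<Longrightarrow> ((\<lambda>y. f (x, y)) has_sum g x) (B x)"
    and "(g has_sum S) A"
    and "\<And>x y. x \<in> A \<Longrightarrow> y \<in> B x \<Longrightarrow> f (x, y) \<ge> 0"
  shows "(f has_sum S) (Sigma A B)"
proof (rule has_sum_SigmaI[OF assms(1,2)])
  show "f summable_on Sigma A B"
    by (rule summable_on_SigmaI[OF assms(1) _ assms(3)]) (use assms(2) in \<open>auto dest: has_sum_imp_summable\<close>)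
qed auto

lemma sums2:
  fixes q :: real assumes "0 < q" "q < 1"
  shows "(\<lambda>n. real (Suc n) * real (Suc (Suc n)) * q ^ n) sums (2 / (1 - q)^3)"
proof -
  have "(\<lambda>n. diffs (\<lambda>n. real (Suc n)) n * q^n) sums (2 / (1 - q)^3)"
  proof (rule termdiffs_sums_strong[where K=1])
    fix z :: real assume "norm z < 1"
    thus "(\<lambda>n. real (Suc n) * z^n) sums (1 / (1 - z)^2)"
      using geometric_deriv_sums[of z] by simp
  next
    have a: "1 - q \<noteq> 0" using assms by auto
    have e: "(0 * (1 - q)^2 - 1 * (real 2 * ((0 - 1) * (1 - q) ^ (2 - Suc 0)))) / ((1 - q)^2 * (1 - q)^2) = 2 / (1-q)^3"
    proof -
      have "(0 * (1 - q)^2 - 1 * (real 2 * ((0 - 1) * (1 - q) ^ (2 - Suc 0)))) / ((1 - q)^2 * (1 - q)^2)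
          = (2 * (1-q)) / ((1-q)^3 * (1-q))" by (simp add: eval_nat_numeral)
      also have "\<dots> = 2 / (1-q)^3" using a by (rule nonzero_mult_divide_mult_cancel_right)
      finally show ?thesis .
    qed
    show "((\<lambda>z. 1 / (1 - z)^2) has_field_derivative (2 / (1 - q)^3)) (at q)"
      apply (rule DERIV_cong)
       apply (rule derivative_eq_intros refl)+
      using a apply simp
       apply (rule refl)
      by (rule e)
  qed (use assms in auto)
  thus ?thesis unfolding diffs_def by (simp add: mult_ac)
qed

lemma alg_perk:
  fixes a p M :: real assumes "a \<noteq> 0"
  shows "(a^2*p)*(2/a^3) + (a^2*p*(M-2))*(1/a^2) + (-(a^2*p)*M)*(1/a) = (1-a)*p*(M*(1-(1-a))+2)/(1-(1-a))"
  using assms by (simp add: field_simps power2_eq_square power3_eq_cube)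

lemma perk:
  fixes q :: real and m :: nat assumes q: "0 < q" "q < 1" and m: "1 \<le> m"
  shows "(\<lambda>s. (1-q)^2 * q^s * (if m \<le> s+1 then real (s+2) * (real (s+1) - real m) else 0))
           sums (q^m * (real m * (1-q) + 2) / (1-q))"
proof -
  define c where "c = (1-q)^2 * q^(m-1)"
  have nq: "norm q < 1" using q by auto
  have S: "(\<lambda>n. c * (real (Suc n) * real (Suc (Suc n)) * q ^ n) + (c * (real m - 2)) * (real (Suc n) * q^n)
       + (- c * real m) * q^n) sums (c * (2 / (1 - q)^3) + (c * (real m - 2)) * (1 / (1-q)^2) + (- c * real m) * (1 / (1-q)))"
    by (intro sums_add sums_mult sums2 q geometric_deriv_sums geometric_sums nq)
  have eqf: "(\<lambda>n. c * (real (Suc n) * real (Suc (Suc n)) * q ^ n) + (c * (real m - 2)) * (real (Suc n) * q^n)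
       + (- c * real m) * q^n) = (\<lambda>n. (1-q)^2 * q^(n + (m-1)) * (if m \<le> (n + (m-1))+1 then real ((n + (m-1))+2) * (real ((n + (m-1))+1) - real m) else 0))"
  proof
    fix n
    have e1: "n + (m-1) + 1 = n + m" "n + (m-1) + 2 = n + m + 1" using m by auto
    show "c * (real (Suc n) * real (Suc (Suc n)) * q ^ n) + (c * (real m - 2)) * (real (Suc n) * q^n)
       + (- c * real m) * q^n = (1-q)^2 * q^(n + (m-1)) * (if m \<le> (n + (m-1))+1 then real ((n + (m-1))+2) * (real ((n + (m-1))+1) - real m) else 0)"
      unfolding e1 c_def by (simp add: power_add algebra_simps)
  qed
  have a: "1 - q \<noteq> 0" using q by auto
  have qm: "q^m = q * q^(m-1)" using m by (metis Suc_diff_1 less_le_trans power_Suc zero_less_one)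
  have eqv: "c * (2 / (1 - q)^3) + (c * (real m - 2)) * (1 / (1-q)^2) + (- c * real m) * (1 / (1-q))
     = q^m * (real m * (1-q) + 2) / (1-q)"
    unfolding c_def qm using alg_perk[OF a, of "q^(m-1)" "real m"] by (simp add: mult.assoc)
  have "(\<lambda>n. (1-q)^2 * q^(n + (m-1)) * (if m \<le> (n + (m-1))+1 then real ((n + (m-1))+2) * (real ((n + (m-1))+1) - real m) else 0))
     sums (q^m * (real m * (1-q) + 2) / (1-q))"
    using S unfolding eqf eqv .
  then show ?thesis
    by (subst (asm) sums_zero_iff_shift) auto
qed

lemma psi_summable:
  fixes q :: real assumes q: "0 < q" "q < 1"
  shows "(\<lambda>t::nat. q^(2^t) * (2^t*(1-q)+2)) summable_on UNIV"
proof -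
  have nq: "norm q < 1" using q by auto
  have u: "(\<lambda>j. real (Suc j) * q^j) summable_on UNIV"
    using sums_nonneg_imp_has_sum[OF geometric_deriv_sums[OF nq]] q
    by (auto simp: summable_on_def)
  have w: "(\<lambda>j. q^j) summable_on UNIV"
    using sums_nonneg_imp_has_sum[OF geometric_sums[OF nq]] q
    by (auto simp: summable_on_def)
  have inj: "inj (\<lambda>t::nat. (2::nat)^t)" by (auto intro: injI simp: power_inject_exp)
  have u2: "(\<lambda>t. real (Suc (2^t)) * q^(2^t)) summable_on UNIV"
  proof -
    have "(\<lambda>j. real (Suc j) * q^j) summable_on range (\<lambda>t::nat. (2::nat)^t)"
      by (rule summable_on_subset_banach[OF u]) auto
    then show ?thesis using summable_on_reindex[OF inj, of "\<lambda>j. real (Suc j) * q^j"] by (simp add: o_def)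
  qed
  have w2: "(\<lambda>t. q^(2^t)) summable_on UNIV"
  proof -
    have "(\<lambda>j. q^j) summable_on range (\<lambda>t::nat. (2::nat)^t)"
      by (rule summable_on_subset_banach[OF w]) auto
    then show ?thesis using summable_on_reindex[OF inj, of "\<lambda>j. q^j"] by (simp add: o_def)
  qed
  have "(\<lambda>t. (1-q) * (real (Suc (2^t)) * q^(2^t)) + (1+q) * q^(2^t)) summable_on UNIV"
    by (intro summable_on_add summable_on_cmult_right u2 w2)
  moreover have "(\<lambda>t. (1-q) * (real (Suc (2^t)) * q^(2^t)) + (1+q) * q^(2^t)) = (\<lambda>t::nat. q^(2^t) * (2^t*(1-q)+2))"
    by (auto simp: algebra_simps)
  ultimately show ?thesis by simp
qed

definition HH :: "real \<Rightarrow> nat \<Rightarrow> nat \<Rightarrow> real" where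
  "HH q k s = (1-q)^2 * q^s * (if 2^k \<le> s+1 then real (s+2) * (real (s+1) - 2^k) else 0)"

lemma HH_nonneg: "0 < q \<Longrightarrow> q < 1 \<Longrightarrow> HH q k s \<ge> 0"
proof -
  assume q: "0 < q" "q < 1"
  have "(if 2^k \<le> s+1 then real (s+2) * (real (s+1) - 2^k) else 0) \<ge> 0"
  proof (cases "2^k \<le> s+1")
    case True
    then have "(2::real)^k \<le> real (s+1)" by (metis of_nat_le_iff of_nat_numeral of_nat_power)
    then show ?thesis using True by auto
  qed auto
  then show ?thesis unfolding HH_def using q by auto
qed

lemma HH_zero: "s < k \<Longrightarrow> HH q k s = 0"
proof -
  assume "s < k"
  then have "s + 1 < 2^k" using less_exp[of k] by linarith
  then show ?thesis unfolding HH_def by auto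
qed

lemma Gsum:
  fixes q :: real assumes q: "0 < q" "q < 1"
  shows "((\<lambda>s. \<Sum>k\<le>s. HH q k s) has_sum (1/(1-q) * (\<Sum>t. q^(2^t) * (2^t*(1-q)+2)))) UNIV"
proof -
  define \<psi> where "\<psi> = (\<lambda>t::nat. q^(2^t) * (2^t*(1-q)+2))"
  have "(\<psi> has_sum infsum \<psi> UNIV) UNIV" using psi_summable[OF q] unfolding \<psi>_def by (rule has_sum_infsum)
  moreover then have "suminf \<psi> = infsum \<psi> UNIV" using has_sum_imp_sums sums_unique by metis
  ultimately have psi: "(\<psi> has_sum suminf \<psi>) UNIV" by simp
  have Phi: "((\<lambda>k. 1/(1-q) * \<psi> k) has_sum (1/(1-q) * suminf \<psi>)) UNIV"
    by (rule has_sum_cmult_right[OF psi])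
  have perk': "((\<lambda>s. HH q k s) has_sum (1/(1-q) * \<psi> k)) UNIV" for k
  proof -
    have "(\<lambda>s. HH q k s) sums (1/(1-q) * \<psi> k)"
      using perk[OF q, of "2^k"] unfolding HH_def \<psi>_def of_nat_power of_nat_numeral by simp
    then show ?thesis by (rule sums_nonneg_imp_has_sum) (rule HH_nonneg[OF q])
  qed
  have all: "((\<lambda>(k,s). HH q k s) has_sum (1/(1-q) * suminf \<psi>)) (UNIV \<times> UNIV)"
    by (rule nn_Sigma[OF _ Phi]) (use perk' HH_nonneg[OF q] in auto)
  then have all2: "((\<lambda>(s,k). HH q k s) has_sum (1/(1-q) * suminf \<psi>)) (UNIV \<times> UNIV)"
    by (subst (asm) has_sum_swap) (simp add: case_prod_unfold)
  have pers: "((\<lambda>k. HH q k s) has_sum (\<Sum>k\<le>s. HH q k s)) UNIV" for s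
  proof -
    have "((\<lambda>k. HH q k s) has_sum (\<Sum>k\<le>s. HH q k s)) {..s}" by simp
    then show ?thesis
      by (subst (asm) has_sum_cong_neutral[where T=UNIV and g="\<lambda>k. HH q k s"]) (auto intro: HH_zero)
  qed
  have "((\<lambda>s. \<Sum>k\<le>s. HH q k s) has_sum (1/(1-q) * suminf \<psi>)) UNIV"
    by (rule has_sum_Sigma'[OF all2]) (use pers in simp)
  then show ?thesis unfolding \<psi>_def .
qed


lemma geo2: "(\<Sum>k\<le>t. (2::real)^k) = 2^(t+1) - 1"
  by (induction t) auto

lemma diag:
  assumes "Cinf_lengths C"
  shows "(\<Sum>i\<le>s. real (length (C (i, s-i)))) =
     real (s+1) + (\<Sum>k\<le>s. (if 2^k \<le> s+1 then real (s+2) * (real (s+1) - 2^k) else 0))"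
proof -
  obtain t where t: "2^t \<le> s+1" "s+1 < 2^(t+1)" using ex_power_ivl1[of 2 "s+1"] by auto
  define r where "r = s+1-2^t"
  have P1: "(1::nat) \<le> 2^t" by simp
  have P2: "(2::nat)^(t+1) = 2 * 2^t" by simp
  have sr: "s = 2^t - 1 + r" and rle: "r \<le> 2^t - 1"
    using t P1 P2 unfolding r_def by linarith+
  define L where "L = short_len t s r"
  define S1 where "S1 = {(i, j). i + j = s \<and> int (length (C (i, j))) = L}"
  define S2 where "S2 = {(i, j). i + j = s \<and> int (length (C (i, j))) = L + 1}"
  have c1: "card S1 = 2^t - 1 - r" and c2: "card S2 = 2 * r + 1"
    using assms sr rle unfolding Cinf_lengths_def S1_def S2_def L_def by blast+
  define Dg where "Dg = {(i, j). i + j = s}"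
  have Dg_img: "Dg = (\<lambda>i. (i, s-i)) ` {..s}"
    unfolding Dg_def by (auto simp: image_iff)
  have injD: "inj_on (\<lambda>i. (i, s-i)) {..s}" by (auto intro: inj_onI)
  have finD: "finite Dg" unfolding Dg_img by simp
  have cD: "card Dg = s+1" unfolding Dg_img using card_image[OF injD] by simp
  have sub: "S1 \<union> S2 \<subseteq> Dg" unfolding S1_def S2_def Dg_def by auto
  have disj: "S1 \<inter> S2 = {}" unfolding S1_def S2_def by auto
  have fin1: "finite S1" and fin2: "finite S2" using sub finD finite_subset by blast+
  have "card (S1 \<union> S2) = s + 1"
    using card_Un_disjoint[OF fin1 fin2 disj] c1 c2 sr rle using P1 by simp
  then have U: "S1 \<union> S2 = Dg" using card_subset_eq[OF finD sub] cD by simp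
  have "(\<Sum>i\<le>s. real (length (C (i, s-i)))) = (\<Sum>p\<in>Dg. real (length (C p)))"
    unfolding Dg_img by (simp add: sum.reindex[OF injD])
  also have "\<dots> = (\<Sum>p\<in>S1. real (length (C p))) + (\<Sum>p\<in>S2. real (length (C p)))"
    unfolding U[symmetric] by (rule sum.union_disjoint[OF fin1 fin2 disj])
  also have "(\<Sum>p\<in>S1. real (length (C p))) = (\<Sum>p\<in>S1. real_of_int L)"
  proof (rule sum.cong[OF refl])
    fix p assume "p \<in> S1"
    then have "int (length (C p)) = L" unfolding S1_def by auto
    then show "real (length (C p)) = real_of_int L" by (metis of_int_of_nat_eq)
  qed
  also have "(\<Sum>p\<in>S2. real (length (C p))) = (\<Sum>p\<in>S2. real_of_int L + 1)"
  proof (rule sum.cong[OF refl])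
    fix p assume "p \<in> S2"
    then have "int (length (C p)) = L + 1" unfolding S2_def by auto
    then show "real (length (C p)) = real_of_int L + 1" by (metis of_int_of_nat_eq of_int_add of_int_1)
  qed
  finally have lhs: "(\<Sum>i\<le>s. real (length (C (i, s-i)))) = real (card S1) * real_of_int L + real (card S2) * (real_of_int L + 1)"
    by simp
  have "(\<Sum>k\<le>s. (if 2^k \<le> s+1 then real (s+2) * (real (s+1) - 2^k) else 0))
      = (\<Sum>k\<in>{k\<in>{..s}. 2^k \<le> s+1}. real (s+2) * (real (s+1) - 2^k))"
    by (rule sum.inter_filter[symmetric]) simp
  also have "{k\<in>{..s}. 2^k \<le> s+1} = {..t}"
  proof (intro set_eqI iffI)
    fix k assume "k \<in> {k\<in>{..s}. 2^k \<le> s+1}"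
    then have "2^k < (2::nat)^(t+1)" using t by auto
    then show "k \<in> {..t}" using power_less_imp_less_exp[of "2::nat" k "t+1"] by auto
  next
    fix k assume "k \<in> {..t}"
    then have "(2::nat)^k \<le> 2^t" by (simp add: power_increasing)
    moreover have "k < 2^k" by (rule less_exp)
    ultimately have "k \<le> s" "2^k \<le> s+1" using t(1) by linarith+
    then show "k \<in> {k\<in>{..s}. 2^k \<le> s+1}" by simp
  qed
  also have "(\<Sum>k\<le>t. real (s+2) * (real (s+1) - 2^k)) = real (s+2) * (real (t+1) * real (s+1) - (2^(t+1) - 1))"
    by (simp add: sum_distrib_left[symmetric] sum_subtractf geo2)
  finally have rhs: "(\<Sum>k\<le>s. (if 2^k \<le> s+1 then real (s+2) * (real (s+1) - 2^k) else 0))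
     = real (s+2) * (real (t+1) * real (s+1) - (2^(t+1) - 1))" .
  define P where "P = (2::real)^t"
  have R: "real r = real s + 1 - P" unfolding r_def P_def using t by (simp add: of_nat_diff)
  have sr1: "Suc r \<le> 2^t" using rle P1 by linarith
  have cc1: "real (card S1) = P - 1 - real r" unfolding c1 P_def using of_nat_diff[OF sr1, where 'a=real] by simp
  have cc2: "real (card S2) = 2 * real r + 1" unfolding c2 by simp
  have LL: "real_of_int L = (real t - 1) * (real s + 2) + 2 * real r + 2"
    unfolding L_def short_len_def by simp
  have P2': "(2::real)^(t+1) = 2 * P" unfolding P_def by simp
  show ?thesis unfolding lhs rhs cc1 cc2 LL P2' R
    by (simp add: algebra_simps)
qed

theorem corollary5:
  fixes C :: "nat \<times> nat \<Rightarrow> bool list" and q :: real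
  assumes "prefix_code C"
    and "Cinf_lengths C"
    and "0 < q" and "q < 1"
  shows "((\<lambda>a. tdgd q a * real (length (C a))) has_sum
          (1 + 1 / (1 - q) * (\<Sum>t. q ^ (2 ^ t) * (2 ^ t * (1 - q) + 2)))) UNIV"
proof -
  have q: "0 < q" "q < 1" using assms by auto
  define f where "f = (\<lambda>a. tdgd q a * real (length (C a)))"
  define F where "F = (\<lambda>(s, i). f (i, s - i))"
  define g where "g = (\<lambda>s. (1-q)^2 * q^s * (\<Sum>i\<le>s. real (length (C (i, s-i)))))"
  define RHS where "RHS = 1 + 1 / (1 - q) * (\<Sum>t. q ^ (2 ^ t) * (2 ^ t * (1 - q) + 2))"
  have pers: "((\<lambda>i. F (s, i)) has_sum g s) {..s}" for s
  proof -
    have "((\<lambda>i. F (s, i)) has_sum (\<Sum>i\<le>s. F (s, i))) {..s}" by simp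
    moreover have "(\<Sum>i\<le>s. F (s, i)) = g s"
      unfolding F_def f_def g_def tdgd_def sum_distrib_left
      by (rule sum.cong) auto
    ultimately show ?thesis by simp
  qed
  have ga: "g s = (1-q)^2 * q^s * real (Suc s) + (\<Sum>k\<le>s. HH q k s)" for s
    unfolding g_def diag[OF assms(2)] HH_def by (simp add: sum_distrib_left algebra_simps)
  have nq: "norm q < 1" using q by auto
  have "(\<lambda>s. (1-q)^2 * (real (Suc s) * q^s)) sums ((1-q)^2 * (1 / (1-q)^2))"
    by (rule sums_mult[OF geometric_deriv_sums[OF nq]])
  moreover have "(1-q)^2 * (1 / (1-q)^2) = 1" using q by simp
  ultimately have "(\<lambda>s. (1-q)^2 * q^s * real (Suc s)) sums 1" by (simp add: mult_ac)
  then have A: "((\<lambda>s. (1-q)^2 * q^s * real (Suc s)) has_sum 1) UNIV"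
    by (rule sums_nonneg_imp_has_sum) (use q in simp)
  have "(g has_sum RHS) UNIV"
    unfolding ga RHS_def by (rule has_sum_add[OF A Gsum[OF q]])
  then have "(F has_sum RHS) (Sigma UNIV (\<lambda>s. {..s}))"
    by (rule nn_Sigma[OF pers]) (use q in \<open>auto simp: F_def f_def tdgd_def\<close>)
  also have "(F has_sum RHS) (Sigma UNIV (\<lambda>s. {..s})) \<longleftrightarrow> (f has_sum RHS) UNIV"
    by (rule has_sum_reindex_bij_witness[where j="\<lambda>(s,i). (i, s-i)" and i="\<lambda>(a,b). (a+b, a)"])
       (auto simp: F_def)
  finally show ?thesis unfolding f_def RHS_def .
qed

end
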